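(* Consider ${\sf BubbleRank}$ (defined below) run for $n$ steps with parameter $\delta\in(0,1)$ and initial list $\mathcal{R}_0$ in a stochastic click bandit satisfying A1–A5 with $\alpha(1)>\dots>\alpha(K)>0$. Let $$\mathbf{P}_t=\{(i,j)\in[K]^2: i<j,\ |\bar{\mathbf{R}}_t^{-1}(i)-\bar{\mathbf{R}}_t^{-1}(j)|=1,\ \mathbf{s}_{t-1}(i,j)\le2\sqrt{\mathbf{n}_{t-1}(i,j)\log(1/\delta)}\}$$ and $\mathbf{P}=\bigcup_{t=1}^n\mathbf{P}_t$. Then on the event $\mathcal{E}$ defined below, $|\mathbf{P}|\le K-1+2|\mathcal{V}_0|$.
   Context: Model. Items $[K]$; a list $\mathcal{R}$ orders all $K$ items, $\mathcal{R}(k)$ is the item at position $k$, $\mathcal{R}^{-1}(i)$ the position of $i$; $\Pi_K$ the set of lists. At time $t$, $(\mathbf{A}_t,\mathbf{X}_t)\in\{0,1\}^K\times\{0,1\}^{\Pi_K\times[K]}$ is drawn i.i.d. from a product distribution; the learner displays $\mathbf{R}_t$ and observes $\mathbf{c}_t(k)=\mathbf{X}_t(\mathbf{R}_t,k)\mathbf{A}_t(\mathbf{R}_t(k))$. $\alpha=\mathbb{E}[\mathbf{A}_t]$, $\chi=\mathbb{E}[\mathbf{X}_t]$, $r(\mathcal{R},\alpha,\chi)=\sum_k\chi(\mathcal{R},k)\alpha(\mathcal{R}(k))$, $\mathcal{R}^*=(1,\dots,K)$. Assumptions for all lists $\mathcal{R},\mathcal{R}'$ and positions $k<\ell$: (A1)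 $r(\mathcal{R},\alpha,\chi)\le r(\mathcal{R}^*,\alpha,\chi)$; (A2) $\{\mathcal{R}(1..k-1)\}=\{\mathcal{R}'(1..k-1)\}\Rightarrow\chi(\mathcal{R},k)=\chi(\mathcal{R}',k)$; (A3) $\chi(\mathcal{R},k)\ge\chi(\mathcal{R},\ell)$; (A4) if $\mathcal{R},\mathcal{R}'$ differ only by exchanging items at positions $k,\ell$, then $\alpha(\mathcal{R}(k))\le\alpha(\mathcal{R}(\ell))\iff\chi(\mathcal{R},\ell)\ge\chi(\mathcal{R}',\ell)$; (A5) $\chi(\mathcal{R},k)\ge\chi(\mathcal{R}^*,k)$. $\mathcal{V}(\mathcal{R})=\{(i,j)\in[K]^2:i<j,\ \mathcal{R}^{-1}(i)>\mathcal{R}^{-1}(j)\}$, $\mathcal{V}_0=\mathcal{V}(\mathcal{R}_0)$. Algorithm ${\sf BubbleRank}$: $\mathbf{s}_0\equiv\mathbf{n}_0\equiv0$, $\bar{\mathbf{R}}_1=\mathcal{R}_0$. For $t=1,\dots,n$: $h=t\bmod2$, $\mathbf{R}_t\leftarrow\bar{\mathbf{R}}_t$; for $k=1,\dots,\lfloor(K-h)/2\rfloor$ with $i=\mathbf{R}_t(2k-1+h)$, $j=\mathbf{R}_t(2k+h)$: if $\mathbf{s}_{t-1}(i,j)\le2\sqrt{\mathbf{n}_{t-1}(i,j)\log(1/\delta)}$ exchange these two positions with probability $1/2$. Display $\mathbf{R}_t$, observe $\mathbf{c}_t$. $\mathbf{s}_t=\mathbf{s}_{t-1}$, $\mathbf{n}_t=\mathbf{n}_{t-1}$;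 for each such $k$ with $i=\mathbf{R}_t(2k-1+h)$, $j=\mathbf{R}_t(2k+h)$: if $|\mathbf{c}_t(2k-1+h)-\mathbf{c}_t(2k+h)|=1$, add $\mathbf{c}_t(2k-1+h)-\mathbf{c}_t(2k+h)$ to $\mathbf{s}_t(i,j)$, its negative to $\mathbf{s}_t(j,i)$, and $1$ to $\mathbf{n}_t(i,j),\mathbf{n}_t(j,i)$. Then $\bar{\mathbf{R}}_{t+1}=\bar{\mathbf{R}}_t$; for $k=1,\dots,K-1$ in order with $i=\bar{\mathbf{R}}_{t+1}(k)$, $j=\bar{\mathbf{R}}_{t+1}(k+1)$: if $\mathbf{s}_t(j,i)>2\sqrt{\mathbf{n}_t(j,i)\log(1/\delta)}$ exchange positions $k,k+1$ of $\bar{\mathbf{R}}_{t+1}$. Event $\mathcal{E}=\bigcap_{t\in[n]}(\mathcal{E}_{t,1}\cap\mathcal{E}_{t,2})$, where $\mathcal{E}_{t,1}$: for all $i<j$, $\frac{\alpha(i)-\alpha(j)}{\alpha(i)+\alpha(j)}\mathbf{n}_t(i,j)-2\sqrt{\mathbf{n}_t(i,j)\log(1/\delta)}\le\mathbf{s}_t(i,j)$; and $\mathcal{E}_{t,2}$: for all $i>j$, $\mathbf{s}_t(i,j)\le2\sqrt{\mathbf{n}_t(i,j)\log(1/\delta)}$. *)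

theory Defs
  imports Complex_Main
begin

definition perms :: "nat \<Rightarrow> nat list set" where
  "perms K = {R. distinct R \<and> set R = {1..K}}"

definition item :: "nat list \<Rightarrow> nat \<Rightarrow> nat" where
  "item R k = R ! (k - 1)"

definition pos :: "nat list \<Rightarrow> nat \<Rightarrow> nat" where
  "pos R i = (THE k. 1 \<le> k \<and> k \<le> length R \<and> R ! (k - 1) = i)"

definition swap_pos :: "nat list \<Rightarrow> nat \<Rightarrow> nat \<Rightarrow> nat list" where
  "swap_pos R k l = R[k - 1 := R ! (l - 1), l - 1 := R ! (k - 1)]"

definition opt_list :: "nat \<Rightarrow> nat list" where
  "opt_list K = [1..<K+1]"

definition reward :: "nat \<Rightarrow> nat list \<Rightarrow> (nat \<Rightarrow> real) \<Rightarrow> (nat list \<Rightarrow> nat \<Rightarrow> real) \<Rightarrow> real" where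
  "reward K R \<alpha> \<chi> = (\<Sum>k=1..K. \<chi> R k * \<alpha> (item R k))"

definition inversions :: "nat \<Rightarrow> nat list \<Rightarrow> (nat \<times> nat) set" where
  "inversions K R = {(i, j). i \<in> {1..K} \<and> j \<in> {1..K} \<and> i < j \<and> pos R i > pos R j}"

definition click_model_assms ::
  "nat \<Rightarrow> (nat \<Rightarrow> real) \<Rightarrow> (nat list \<Rightarrow> nat \<Rightarrow> real) \<Rightarrow> bool" where
  "click_model_assms K \<alpha> \<chi> \<longleftrightarrow>
     (\<forall>R\<in>perms K. reward K R \<alpha> \<chi> \<le> reward K (opt_list K) \<alpha> \<chi>) \<and>
     (\<forall>R\<in>perms K. \<forall>R'\<in>perms K. \<forall>k\<in>{1..K}.
        set (take (k - 1) R) = set (take (k - 1) R') \<longrightarrow> \<chi> R k = \<chi> R' k) \<and>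
     (\<forall>R\<in>perms K. \<forall>k l. 1 \<le> k \<and> k < l \<and> l \<le> K \<longrightarrow> \<chi> R k \<ge> \<chi> R l) \<and>
     (\<forall>R\<in>perms K. \<forall>k l. 1 \<le> k \<and> k < l \<and> l \<le> K \<longrightarrow>
        (\<alpha> (item R k) \<le> \<alpha> (item R l) \<longleftrightarrow> \<chi> R l \<ge> \<chi> (swap_pos R k l) l)) \<and>
     (\<forall>R\<in>perms K. \<forall>k\<in>{1..K}. \<chi> R k \<ge> \<chi> (opt_list K) k)"

definition thr :: "real \<Rightarrow> nat \<Rightarrow> real" where
  "thr \<delta> m = 2 * sqrt (real m * ln (1 / \<delta>))"

type_synonym br_state = "nat list \<times> (nat \<Rightarrow> nat \<Rightarrow> int) \<times> (nat \<Rightarrow> nat \<Rightarrow> nat)"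

text \<open>Displayed list R_t obtained from the leader list; coin t k is the outcome of the
  fair coin used for the k-th pair at time t.\<close>
definition display_list ::
  "nat \<Rightarrow> real \<Rightarrow> (nat \<Rightarrow> nat \<Rightarrow> bool) \<Rightarrow> nat \<Rightarrow> nat list
    \<Rightarrow> (nat \<Rightarrow> nat \<Rightarrow> int) \<Rightarrow> (nat \<Rightarrow> nat \<Rightarrow> nat) \<Rightarrow> nat list" where
  "display_list K \<delta> coin t Rb s n =
     (let h = t mod 2 in
      foldl (\<lambda>R k. let i = item R (2*k - 1 + h); j = item R (2*k + h) in
                   if real_of_int (s i j) \<le> thr \<delta> (n i j) \<and> coin t k
                   then swap_pos R (2*k - 1 + h) (2*k + h) else R)
        Rb [1..<(K - h) div 2 + 1])"

definition clicks ::
  "(nat \<Rightarrow> nat \<Rightarrow> bool) \<Rightarrow> (nat \<Rightarrow> nat list \<Rightarrow> nat \<Rightarrow> bool) \<Rightarrow> nat \<Rightarrow> nat list \<Rightarrow> nat \<Rightarrow> int" where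
  "clicks A X t Rt k = (if X t Rt k \<and> A t (item Rt k) then 1 else 0)"

definition update_stats ::
  "nat \<Rightarrow> nat \<Rightarrow> nat list \<Rightarrow> (nat \<Rightarrow> int)
    \<Rightarrow> (nat \<Rightarrow> nat \<Rightarrow> int) \<times> (nat \<Rightarrow> nat \<Rightarrow> nat)
    \<Rightarrow> (nat \<Rightarrow> nat \<Rightarrow> int) \<times> (nat \<Rightarrow> nat \<Rightarrow> nat)" where
  "update_stats K t Rt c sn0 =
     (let h = t mod 2 in
      foldl (\<lambda>(s, n) k.
               let a = 2*k - 1 + h; b = 2*k + h; i = item Rt a; j = item Rt b; d = c a - c b in
               if \<bar>d\<bar> = 1 then
                 ((\<lambda>x y. if x = i \<and> y = j then s x y + d
                          else if x = j \<and> y = i then s x y - d else s x y),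
                  (\<lambda>x y. if (x = i \<and> y = j) \<or> (x = j \<and> y = i) then n x y + 1 else n x y))
               else (s, n))
        sn0 [1..<(K - h) div 2 + 1])"

definition leader_update ::
  "nat \<Rightarrow> real \<Rightarrow> (nat \<Rightarrow> nat \<Rightarrow> int) \<Rightarrow> (nat \<Rightarrow> nat \<Rightarrow> nat) \<Rightarrow> nat list \<Rightarrow> nat list" where
  "leader_update K \<delta> s n Rb =
     foldl (\<lambda>R k. let i = item R k; j = item R (k + 1) in
                  if real_of_int (s j i) > thr \<delta> (n j i) then swap_pos R k (k + 1) else R)
       Rb [1..<K]"

definition br_step ::
  "nat \<Rightarrow> real \<Rightarrow> (nat \<Rightarrow> nat \<Rightarrow> bool) \<Rightarrow> (nat \<Rightarrow> nat \<Rightarrow> bool)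
    \<Rightarrow> (nat \<Rightarrow> nat list \<Rightarrow> nat \<Rightarrow> bool) \<Rightarrow> nat \<Rightarrow> br_state \<Rightarrow> br_state" where
  "br_step K \<delta> coin A X t st =
     (case st of (Rb, s, n) \<Rightarrow>
       (let Rt = display_list K \<delta> coin t Rb s n;
            c = clicks A X t Rt;
            sn' = update_stats K t Rt c (s, n)
        in (leader_update K \<delta> (fst sn') (snd sn') Rb, fst sn', snd sn')))"

text \<open>br_run ... t = (leader list for time t+1, s_t, n_t).\<close>
fun br_run ::
  "nat \<Rightarrow> real \<Rightarrow> (nat \<Rightarrow> nat \<Rightarrow> bool) \<Rightarrow> (nat \<Rightarrow> nat \<Rightarrow> bool)
    \<Rightarrow> (nat \<Rightarrow> nat list \<Rightarrow> nat \<Rightarrow> bool) \<Rightarrow> nat list \<Rightarrow> nat \<Rightarrow> br_state" where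
  "br_run K \<delta> coin A X R0 0 = (R0, (\<lambda>_ _. 0), (\<lambda>_ _. 0))"
| "br_run K \<delta> coin A X R0 (Suc t) = br_step K \<delta> coin A X (Suc t) (br_run K \<delta> coin A X R0 t)"

definition event_E ::
  "nat \<Rightarrow> real \<Rightarrow> (nat \<Rightarrow> real) \<Rightarrow> nat \<Rightarrow> (nat \<Rightarrow> br_state) \<Rightarrow> bool" where
  "event_E K \<delta> \<alpha> horizon run \<longleftrightarrow>
     (\<forall>t\<in>{1..horizon}.
        let s = fst (snd (run t)); n = snd (snd (run t)) in
        (\<forall>i\<in>{1..K}. \<forall>j\<in>{1..K}. i < j \<longrightarrow>
            (\<alpha> i - \<alpha> j) / (\<alpha> i + \<alpha> j) * real (n i j) - thr \<delta> (n i j) \<le> real_of_int (s i j)) \<and>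
        (\<forall>i\<in>{1..K}. \<forall>j\<in>{1..K}. i > j \<longrightarrow> real_of_int (s i j) \<le> thr \<delta> (n i j)))"

definition P_set :: "nat \<Rightarrow> real \<Rightarrow> (nat \<Rightarrow> br_state) \<Rightarrow> nat \<Rightarrow> (nat \<times> nat) set" where
  "P_set K \<delta> run t =
     (let Rb = fst (run (t - 1)); s = fst (snd (run (t - 1))); n = snd (snd (run (t - 1))) in
      {(i, j). i \<in> {1..K} \<and> j \<in> {1..K} \<and> i < j \<and>
               \<bar>int (pos Rb i) - int (pos Rb j)\<bar> = 1 \<and>
               real_of_int (s i j) \<le> thr \<delta> (n i j)})"

end

theory Submission
  imports Defs
begin

definition uadj :: "nat list \<Rightarrow> (nat \<times> nat) set" where
  "uadj R = (\<lambda>m. (min (R!m) (R!Suc m), max (R!m) (R!Suc m))) ` {m. Suc m < length R}"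

lemma finite_uadj: "finite (uadj R)"
  unfolding uadj_def by (rule finite_imageI, rule finite_subset[of _ "{..<length R}"]) auto

lemma pos_char:
  assumes "distinct R" "1 \<le> p" "p \<le> length R" "R!(p-1) = x"
  shows "pos R x = p"
  unfolding pos_def
proof (rule the_equality)
  show "1 \<le> p \<and> p \<le> length R \<and> R ! (p - 1) = x" using assms by auto
next
  fix q assume "1 \<le> q \<and> q \<le> length R \<and> R ! (q - 1) = x"
  then have "q - 1 = p - 1" using assms nth_eq_iff_index_eq[of R "q-1" "p-1"] by auto
  then show "q = p" using assms \<open>1 \<le> q \<and> q \<le> length R \<and> R ! (q - 1) = x\<close> by auto
qed

lemma pos_in:
  assumes "distinct R" "x \<in> set R"
  shows "1 \<le> pos R x \<and> pos R x \<le> length R \<and> R!(pos R x - 1) = x"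
proof -
  obtain m where m: "m < length R" "R!m = x" using assms(2) by (auto simp: in_set_conv_nth)
  have "pos R x = Suc m" using pos_char[of R "Suc m" x] assms m by auto
  then show ?thesis using m by auto
qed

lemma perm_props:
  assumes "R \<in> perms K"
  shows "distinct R" "set R = {1..K}" "length R = K"
  using assms distinct_card[of R] by (auto simp: perms_def)

lemma adj_mem:
  assumes "L \<in> perms K" "i \<in> {1..K}" "j \<in> {1..K}" "i < j"
    "\<bar>int (pos L i) - int (pos L j)\<bar> = 1"
  shows "(i, j) \<in> uadj L"
proof -
  have d: "distinct L" and s: "set L = {1..K}" using perm_props assms by auto
  have pi: "1 \<le> pos L i \<and> pos L i \<le> length L \<and> L!(pos L i - 1) = i" using pos_in d s assms by auto
  have pj: "1 \<le> pos L j \<and> pos L j \<le> length L \<and> L!(pos L j - 1) = j" using pos_in d s assms by auto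
  show ?thesis
  proof (cases "pos L j = pos L i + 1")
    case True
    let ?m = "pos L i - 1"
    have "Suc ?m < length L" "L!?m = i" "L!Suc ?m = j" using True pi pj by auto
    then show ?thesis unfolding uadj_def using assms(4)
      by (auto intro!: image_eqI[where x="?m"])
  next
    case False
    then have F: "pos L i = pos L j + 1" using assms(5) by auto
    let ?m = "pos L j - 1"
    have "Suc ?m < length L" "L!?m = j" "L!Suc ?m = i" using F pi pj by auto
    then show ?thesis unfolding uadj_def using assms(4)
      by (auto intro!: image_eqI[where x="?m"])
  qed
qed

definition Inv :: "nat \<Rightarrow> nat list \<Rightarrow> nat list \<Rightarrow> (nat \<times> nat) set \<Rightarrow> bool" where
  "Inv K R0 R U \<longleftrightarrow> R \<in> perms K \<and> finite U \<and> uadj R \<subseteq> U \<and>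
     card U + 2 * card (inversions K R) \<le> K - 1 + 2 * card (inversions K R0)"

lemma swap_step:
  assumes P: "R \<in> perms K" and k: "1 \<le> k" "k < K" and lt: "R!k < R!(k-1)"
    and I: "Inv K R0 R U"
  shows "\<exists>U'. U \<subseteq> U' \<and> Inv K R0 (swap_pos R k (k+1)) U'"
proof -
  have d: "distinct R" and s: "set R = {1..K}" and l: "length R = K" using perm_props P by auto
  define a where "a = R!(k-1)"
  define b where "b = R!k"
  define R' where "R' = swap_pos R k (k+1)"
  have R'def: "R' = R[k-1 := b, k := a]" unfolding R'_def swap_pos_def a_def b_def by simp
  have lR': "length R' = K" using R'def l by simp
  have dR': "distinct R'" using R'def d l k unfolding a_def b_def by simp
  have sR': "set R' = {1..K}" using R'def s l k unfolding a_def b_def by simp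
  have PR': "R' \<in> perms K" using dR' sR' by (simp add: perms_def)
  have R'k1: "R'!(k-1) = b" using R'def l k by (simp add: nth_list_update)
  have R'k: "R'!k = a" using R'def l k by (simp add: nth_list_update)
  have R'o: "R'!m = R!m" if "m \<noteq> k-1" "m \<noteq> k" for m using R'def that by simp
  have ab: "a \<noteq> b" using d l k unfolding a_def b_def by (simp add: nth_eq_iff_index_eq)
  have posa: "pos R a = k" using pos_char[of R k a] d l k a_def by auto
  have posb: "pos R b = k+1" using pos_char[of R "k+1" b] d l k b_def by auto
  have posa': "pos R' a = k+1" using pos_char[of R' "k+1" a] dR' lR' k R'k by auto
  have posb': "pos R' b = k" using pos_char[of R' k b] dR' lR' k R'k1 by auto
  have poso: "pos R' x = pos R x" if "x \<in> {1..K}" "x \<noteq> a" "x \<noteq> b" for x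
  proof -
    have px: "1 \<le> pos R x \<and> pos R x \<le> length R \<and> R!(pos R x - 1) = x" using pos_in d s that by auto
    have "pos R x - 1 \<noteq> k - 1" using px that a_def by auto
    moreover have "pos R x - 1 \<noteq> k" using px that b_def by auto
    ultimately have "R'!(pos R x - 1) = x" using R'o px by auto
    then show ?thesis using pos_char[of R' "pos R x" x] dR' lR' px l by auto
  qed
  have poso2: "pos R x \<noteq> k \<and> pos R x \<noteq> k+1" if "x \<in> {1..K}" "x \<noteq> a" "x \<noteq> b" for x
  proof -
    have px: "R!(pos R x - 1) = x" using pos_in[OF d, of x] that s by auto
    show ?thesis
    proof
      show "pos R x \<noteq> k" using px that a_def by auto
      show "pos R x \<noteq> k + 1" using px that b_def by auto
    qed
  qed
  have ainK: "a \<in> {1..K}" and binK: "b \<in> {1..K}" using s l k a_def b_def nth_mem[of "k-1" R] nth_mem[of k R] by auto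
  have pk: "pos R x \<noteq> k" "pos R x \<noteq> k+1" "pos R' x = pos R x"
    if "x \<in> {1..K}" "x \<noteq> a" "x \<noteq> b" for x
    using poso2[OF that] poso[OF that] by auto
  have key: "(pos R j < pos R i) = (pos R' j < pos R' i)"
    if iK: "i \<in> {1..K}" and jK: "j \<in> {1..K}" and ne: "i \<noteq> j" "(i,j) \<noteq> (a,b)" "(i,j) \<noteq> (b,a)" for i j
  proof -
    consider "i = a" | "i = b" | "j = a" | "j = b" | "i \<noteq> a" "i \<noteq> b" "j \<noteq> a" "j \<noteq> b" by blast
    then show ?thesis
    proof cases
      case 1
      then have "j \<noteq> a" "j \<noteq> b" using ne by auto
      note J = pk[OF jK this]
      show ?thesis unfolding 1 posa posa' J(3) using J(1,2) by linarith
    next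
      case 2
      then have "j \<noteq> a" "j \<noteq> b" using ne by auto
      note J = pk[OF jK this]
      show ?thesis unfolding 2 posb posb' J(3) using J(1,2) by linarith
    next
      case 3
      then have "i \<noteq> a" "i \<noteq> b" using ne by auto
      note J = pk[OF iK this]
      show ?thesis unfolding 3 posa posa' J(3) using J(1,2) by linarith
    next
      case 4
      then have "i \<noteq> a" "i \<noteq> b" using ne by auto
      note J = pk[OF iK this]
      show ?thesis unfolding 4 posb posb' J(3) using J(1,2) by linarith
    next
      case 5
      show ?thesis using pk[OF iK 5(1,2)] pk[OF jK 5(3,4)] by simp
    qed
  qed
  have invR: "inversions K R = insert (b, a) (inversions K R')"
  proof (rule set_eqI)
    fix q :: "nat \<times> nat"
    obtain i j where q: "q = (i, j)" by (cases q)
    show "(q \<in> inversions K R) = (q \<in> insert (b, a) (inversions K R'))"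
    proof (cases "(i, j) = (b, a)")
      case True
      then show ?thesis using q ainK binK lt posa posb unfolding inversions_def a_def b_def by auto
    next
      case False
      show ?thesis
      proof (cases "i \<in> {1..K} \<and> j \<in> {1..K} \<and> i < j")
        case True
        then have "(i,j) \<noteq> (a,b)" using lt a_def b_def by auto
        then have "(pos R j < pos R i) = (pos R' j < pos R' i)" using key True False by auto
        then show ?thesis using q True False unfolding inversions_def by auto
      next
        case F2: False
        then show ?thesis using q False unfolding inversions_def by auto
      qed
    qed
  qed
  have bnot: "(b, a) \<notin> inversions K R'" using posa' posb' unfolding inversions_def by auto
  have finv: "finite (inversions K R')"
    by (rule finite_subset[of _ "{1..K} \<times> {1..K}"]) (auto simp: inversions_def)
  have cinv: "card (inversions K R) = Suc (card (inversions K R'))"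
    using invR bnot finv by simp
  define f where "f = (\<lambda>m. (min (R'!m) (R'!Suc m), max (R'!m) (R'!Suc m)))"
  have uR': "uadj R' \<subseteq> uadj R \<union> {f (k-2), f k}"
  proof
    fix q assume "q \<in> uadj R'"
    then obtain m where m: "Suc m < K" "q = f m" unfolding uadj_def f_def using lR' by auto
    show "q \<in> uadj R \<union> {f (k-2), f k}"
    proof (cases "m = k-2 \<or> m = k")
      case True then show ?thesis using m by auto
    next
      case False
      show ?thesis
      proof (cases "m = k - 1")
        case True
        then have "f m = (min (R!m) (R!Suc m), max (R!m) (R!Suc m))"
          unfolding f_def using R'k1 R'k k a_def b_def by (auto simp: min_def max_def)
        then show ?thesis using m l unfolding uadj_def by auto
      next
        case F2: False
        have "R'!m = R!m" "R'!Suc m = R!Suc m" using R'o False F2 k by auto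
        then have "f m = (min (R!m) (R!Suc m), max (R!m) (R!Suc m))" unfolding f_def by simp
        then show ?thesis using m l unfolding uadj_def by auto
      qed
    qed
  qed
  from I have fU: "finite U" and cU: "card U + 2 * card (inversions K R) \<le> K - 1 + 2 * card (inversions K R0)"
    unfolding Inv_def by auto
  define U' where "U' = U \<union> uadj R'"
  have "U' \<subseteq> U \<union> {f (k-2), f k}" using uR' I unfolding U'_def Inv_def by auto
  then have "card U' \<le> card (U \<union> {f (k-2), f k})" using fU by (intro card_mono) auto
  also have "\<dots> \<le> card U + card {f (k-2), f k}" by (rule card_Un_le)
  also have "\<dots> \<le> card U + 2"
  proof -
    have "card {f (k-2), f k} \<le> 2" by (rule card_insert_le_m1) auto
    then show ?thesis by simp
  qed
  finally have "card U' \<le> card U + 2" .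
  moreover have "finite U'" using fU finite_uadj unfolding U'_def by simp
  ultimately have "Inv K R0 R' U'" using PR' cU cinv unfolding Inv_def U'_def by auto
  then show ?thesis unfolding R'_def U'_def by auto
qed

lemma fold_step:
  assumes E: "\<forall>x\<in>{1..K}. \<forall>y\<in>{1..K}. x > y \<longrightarrow> real_of_int (s x y) \<le> thr \<delta> (n x y)"
  shows "\<forall>k\<in>set ks. 1 \<le> k \<and> k < K \<Longrightarrow> Inv K R0 R U \<Longrightarrow>
    \<exists>U'. U \<subseteq> U' \<and> Inv K R0 (foldl (\<lambda>R k. let i = item R k; j = item R (k + 1) in
                  if real_of_int (s j i) > thr \<delta> (n j i) then swap_pos R k (k + 1) else R) R ks) U'"
proof (induction ks arbitrary: R U)
  case Nil then show ?case by auto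
next
  case (Cons k ks)
  have k: "1 \<le> k" "k < K" using Cons.prems by auto
  let ?f = "(\<lambda>R k. let i = item R k; j = item R (k + 1) in
                  if real_of_int (s j i) > thr \<delta> (n j i) then swap_pos R k (k + 1) else R)"
  have fR: "?f R k = (if real_of_int (s (R!k) (R!(k-1))) > thr \<delta> (n (R!k) (R!(k-1)))
      then swap_pos R k (k + 1) else R)" by (simp add: item_def Let_def)
  have "\<exists>U1. U \<subseteq> U1 \<and> Inv K R0 (?f R k) U1"
  proof (cases "real_of_int (s (R!k) (R!(k-1))) > thr \<delta> (n (R!k) (R!(k-1)))")
    case True
    have P: "R \<in> perms K" using Cons.prems unfolding Inv_def by blast
    have d: "distinct R" and s: "set R = {1..K}" and l: "length R = K" using perm_props P by auto
    have inK: "R!k \<in> {1..K}" "R!(k-1) \<in> {1..K}" using s l k nth_mem[of k R] nth_mem[of "k-1" R] by auto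
    have ne: "R!k \<noteq> R!(k-1)" using d l k by (simp add: nth_eq_iff_index_eq)
    have "\<not> (R!(k-1) < R!k)"
    proof
      assume "R!(k-1) < R!k"
      then have "real_of_int (s (R!k) (R!(k-1))) \<le> thr \<delta> (n (R!k) (R!(k-1)))"
        using E inK by blast
      then show False using True by linarith
    qed
    then have "R!k < R!(k-1)" using ne by linarith
    from swap_step[OF P k this Cons.prems(2)] obtain U1 where
      "U \<subseteq> U1" "Inv K R0 (swap_pos R k (k+1)) U1" by blast
    then show ?thesis unfolding fR using True by auto
  next
    case False
    then have "?f R k = R" unfolding fR by simp
    then show ?thesis using Cons.prems by auto
  qed
  then obtain U1 where U1: "U \<subseteq> U1" "Inv K R0 (?f R k) U1" by blast
  from Cons.IH[OF _ U1(2)] Cons.prems obtain U2 where "U1 \<subseteq> U2" "Inv K R0 (foldl ?f (?f R k) ks) U2"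
    by auto
  then show ?case using U1 by auto
qed

lemma run_fst_Suc:
  "fst (br_run K \<delta> coin A X R0 (Suc t)) =
    leader_update K \<delta> (fst (snd (br_run K \<delta> coin A X R0 (Suc t)))) (snd (snd (br_run K \<delta> coin A X R0 (Suc t))))
      (fst (br_run K \<delta> coin A X R0 t))"
  by (simp add: br_step_def Let_def split: prod.split)

theorem lemma5:
  fixes K horizon :: nat and \<delta> :: real and R0 :: "nat list"
    and \<alpha> :: "nat \<Rightarrow> real" and \<chi> :: "nat list \<Rightarrow> nat \<Rightarrow> real"
    and coin :: "nat \<Rightarrow> nat \<Rightarrow> bool" and A :: "nat \<Rightarrow> nat \<Rightarrow> bool"
    and X :: "nat \<Rightarrow> nat list \<Rightarrow> nat \<Rightarrow> bool"
  assumes "0 < \<delta>" and "\<delta> < 1"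
    and "R0 \<in> perms K"
    and "\<forall>i\<in>{1..K}. 0 \<le> \<alpha> i \<and> \<alpha> i \<le> 1"
    and "\<forall>R\<in>perms K. \<forall>k\<in>{1..K}. 0 \<le> \<chi> R k \<and> \<chi> R k \<le> 1"
    and "click_model_assms K \<alpha> \<chi>"
    and "\<forall>i j. 1 \<le> i \<and> i < j \<and> j \<le> K \<longrightarrow> \<alpha> j < \<alpha> i"
    and "\<forall>i\<in>{1..K}. 0 < \<alpha> i"
    and "event_E K \<delta> \<alpha> horizon (br_run K \<delta> coin A X R0)"
  shows "card (\<Union>t\<in>{1..horizon}. P_set K \<delta> (br_run K \<delta> coin A X R0) t)
           \<le> K - 1 + 2 * card (inversions K R0)"
proof -
  let ?run = "br_run K \<delta> coin A X R0"
  have Et: "\<forall>x\<in>{1..K}. \<forall>y\<in>{1..K}. x > y \<longrightarrow>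
      real_of_int (fst (snd (?run t)) x y) \<le> thr \<delta> (snd (snd (?run t)) x y)"
    if "t \<in> {1..horizon}" for t
    using assms(9) that unfolding event_E_def Let_def by blast
  have main: "t < horizon \<Longrightarrow> \<exists>U. Inv K R0 (fst (?run t)) U \<and>
      (\<forall>u\<le>t. fst (?run u) \<in> perms K \<and> uadj (fst (?run u)) \<subseteq> U)" for t
  proof (induction t)
    case 0
    have l: "length R0 = K" using perm_props assms(3) by auto
    have "card (uadj R0) \<le> card {m. Suc m < length R0}"
      unfolding uadj_def by (rule card_image_le, rule finite_subset[of _ "{..<length R0}"]) auto
    also have "{m. Suc m < length R0} = {..<K-1}" using l by auto
    finally have c: "card (uadj R0) \<le> K - 1" by simp
    have "Inv K R0 R0 (uadj R0)" using c assms(3) finite_uadj unfolding Inv_def by auto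
    then show ?case using assms(3) by auto
  next
    case (Suc t)
    then obtain U where U: "Inv K R0 (fst (?run t)) U"
       "\<forall>u\<le>t. fst (?run u) \<in> perms K \<and> uadj (fst (?run u)) \<subseteq> U" by auto
    have E: "\<forall>x\<in>{1..K}. \<forall>y\<in>{1..K}. x > y \<longrightarrow>
      real_of_int (fst (snd (?run (Suc t))) x y) \<le> thr \<delta> (snd (snd (?run (Suc t))) x y)"
      by (rule Et) (use Suc.prems in simp)
    from fold_step[OF E, of "[1..<K]" R0 "fst (?run t)" U] U(1)
    obtain U' where U': "U \<subseteq> U'" "Inv K R0 (fst (?run (Suc t))) U'"
      unfolding run_fst_Suc[of K \<delta> coin A X R0 t] leader_update_def by auto
    have "\<forall>u\<le>Suc t. fst (?run u) \<in> perms K \<and> uadj (fst (?run u)) \<subseteq> U'"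
      using U U' unfolding Inv_def by (auto simp: le_Suc_eq)
    then show ?case using U' by auto
  qed
  show ?thesis
  proof (cases "horizon = 0")
    case True then show ?thesis by simp
  next
    case False
    then obtain U where U: "Inv K R0 (fst (?run (horizon - 1))) U"
      "\<forall>u\<le>horizon - 1. fst (?run u) \<in> perms K \<and> uadj (fst (?run u)) \<subseteq> U"
      using main[of "horizon - 1"] by auto
    have sub: "(\<Union>t\<in>{1..horizon}. P_set K \<delta> ?run t) \<subseteq> U"
    proof clarify
      fix t i j assume t: "t \<in> {1..horizon}" and ij: "(i, j) \<in> P_set K \<delta> ?run t"
      have u: "t - 1 \<le> horizon - 1" using t by auto
      have "(i, j) \<in> uadj (fst (?run (t - 1)))"
        using ij U(2) u adj_mem[of "fst (?run (t - 1))" K i j] unfolding P_set_def Let_def by auto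
      then show "(i, j) \<in> U" using U(2) u by auto
    qed
    have "card (\<Union>t\<in>{1..horizon}. P_set K \<delta> ?run t) \<le> card U"
      using sub U(1) unfolding Inv_def by (intro card_mono) auto
    also have "\<dots> \<le> K - 1 + 2 * card (inversions K R0)" using U(1) unfolding Inv_def by auto
    finally show ?thesis .
  qed
qed

end
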